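(* Let $x\in[0,1]$. For every $d\ge1$ and every measurable $f:\mathbb R^d\to[-1,1]$, $F_4[f](x,x,x,x,x,x)\ge F_2[f](x)^2$.
   Context: For measurable $f:\mathbb R^d\to[-1,1]$, the rounding procedure $\mathrm{Round}_f$ applied to unit vectors $\mathbf v_1,\dots,\mathbf v_k\in\mathbb R^n$: sample independent $\mathbf r^{(1)},\dots,\mathbf r^{(d)}\sim N(\mathbf 0,I_n)$; then, independently for each $i$, set $X_i=1$ with probability $\frac{1+f(\mathbf r^{(1)}\cdot\mathbf v_i,\dots,\mathbf r^{(d)}\cdot\mathbf v_i)}{2}$ and $X_i=-1$ otherwise. $F_k[f](b_{1,2},\dots,b_{k-1,k})$ denotes $\mathbb E[X_1\cdots X_k]$ for any unit vectors with $\mathbf v_i\cdot\mathbf v_j=b_{i,j}$ (it depends only on these inner products); thus $F_2[f](x)=\mathbb E[X_1X_2]$ when $\mathbf v_1\cdot\mathbf v_2=x$, and $F_4[f](x,\dots,x)=\mathbb E[X_1X_2X_3X_4]$ when all six pairwise inner products equal $x$. *)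

theory Defs
  imports "HOL-Probability.Probability"
begin

text \<open>Standard Gaussian N(0,1) on the reals, and the uniform distribution on [0,1]
  (used as auxiliary coins to realise the randomized choice of each X_i).\<close>

definition std_gauss :: "real measure" where
  "std_gauss = density lborel (\<lambda>x. ennreal (std_normal_density x))"

definition unif01 :: "real measure" where
  "unif01 = uniform_measure lborel {0..1}"

text \<open>Sample space of Round_f for k vectors in R^n (index type 'n) with d Gaussian
  vectors (index type 'd): r (j,l) is the l-th coordinate of r^(j) (i.i.d. N(0,1)),
  and u i (i < k) are independent uniform coins on [0,1].\<close>

definition round_space :: "nat \<Rightarrow> (('d::finite \<times> 'n::finite \<Rightarrow> real) \<times> (nat \<Rightarrow> real)) measure" where
  "round_space k = (PiM UNIV (\<lambda>_. std_gauss)) \<Otimes>\<^sub>M (PiM {..<k} (\<lambda>_. unif01))"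

definition gauss_proj :: "('d::finite \<times> 'n::finite \<Rightarrow> real) \<Rightarrow> real^'n \<Rightarrow> real^'d" where
  "gauss_proj r v = (\<chi> j. \<Sum>l\<in>UNIV. r (j, l) * v $ l)"

text \<open>X_i = 1 with probability (1 + f(r^(1).v_i,...,r^(d).v_i))/2 (given r), else -1.\<close>

definition round_X :: "(real^'d \<Rightarrow> real) \<Rightarrow> (real^'n) list \<Rightarrow> nat \<Rightarrow>
    ('d::finite \<times> 'n::finite \<Rightarrow> real) \<times> (nat \<Rightarrow> real) \<Rightarrow> real" where
  "round_X f vs i \<omega> =
     (if snd \<omega> i \<le> (1 + f (gauss_proj (fst \<omega>) (vs ! i))) / 2 then 1 else -1)"

definition round_corr :: "(real^'d::finite \<Rightarrow> real) \<Rightarrow> (real^'n::finite) list \<Rightarrow> real" where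
  "round_corr f vs =
     (\<integral>\<omega>. (\<Prod>i<length vs. round_X f vs i \<omega>) \<partial>(round_space (length vs) :: (('d \<times> 'n \<Rightarrow> real) \<times> (nat \<Rightarrow> real)) measure))"

end

theory Submission
  imports Defs
begin



lemma lborel_orth:
  fixes Q :: "real^'k::{finite,wellorder} \<Rightarrow> real^'k::_"
  assumes Q: "orthogonal_transformation Q"
  shows "distr lborel borel Q = lborel"
proof (rule lborel_eqI[symmetric])
  have lin: "linear Q" using Q by (rule orthogonal_transformation_linear)
  have Qm: "Q \<in> borel_measurable borel"
    using lin by (intro borel_measurable_continuous_onI linear_continuous_on) (simp add: linear_conv_bounded_linear)
  show "sets (distr lborel borel Q) = sets borel" by simp
  fix l u :: "real^'k::{finite,wellorder}"
  assume "\<And>b. b \<in> Basis \<Longrightarrow> l \<bullet> b \<le> u \<bullet> b"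
  define Qi where "Qi = inv Q"
  have Qi: "orthogonal_transformation Qi" unfolding Qi_def using Q by (rule orthogonal_transformation_inv)
  have bij: "bij Q" using Q by (rule orthogonal_transformation_bij)
  have pre: "Q -` box l u = Qi ` box l u"
    unfolding Qi_def using bij by (simp add: bij_vimage_eq_inv_image)
  have bm: "box l u \<in> lmeasurable" by simp
  have "emeasure (distr lborel borel Q) (box l u) = emeasure lborel (Q -` box l u)"
    using Qm by (subst emeasure_distr) auto
  also have "\<dots> = emeasure lebesgue (Q -` box l u)"
  proof -
    have sb: "Q -` box l u \<in> sets lborel" using measurable_sets_borel[OF Qm, of "box l u"] by simp
    then show ?thesis by (simp add: main_part_sets)
  qed
  also have "\<dots> = ennreal (measure lebesgue (Qi ` box l u))"
    unfolding pre using measurable_orthogonal_image[OF Qi bm] by (rule emeasure_eq_measure2)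
  also have "\<dots> = ennreal (measure lebesgue (box l u))"
    using measure_orthogonal_image[OF Qi bm] by simp
  also have "\<dots> = ennreal (measure lborel (box l u))"
    by (subst measure_completion) auto
  also have "\<dots> = ennreal (\<Prod>b\<in>Basis. (u - l) \<bullet> b)"
    using \<open>\<And>b. b \<in> Basis \<Longrightarrow> l \<bullet> b \<le> u \<bullet> b\<close> by (subst measure_lborel_box_eq) auto
  finally show "emeasure (distr lborel borel Q) (box l u) = (\<Prod>b\<in>Basis. (u - l) \<bullet> b)"
    using \<open>\<And>b. b \<in> Basis \<Longrightarrow> l \<bullet> b \<le> u \<bullet> b\<close> 
    by (simp add: prod_nonneg inner_diff_left)
qed



lemma vec_nth_meas[measurable]: "(\<lambda>v::real^'k::finite. v $ k) \<in> borel_measurable borel"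
  by (intro borel_measurable_continuous_onI continuous_intros)

lemma vec_nth_PiM_meas[measurable]: "(vec_nth :: real^'k::finite \<Rightarrow> _) \<in> measurable borel (PiM UNIV (\<lambda>_. borel))"
  by (rule measurable_PiM_single') auto

lemma gdens_eq: "(\<Prod>k\<in>UNIV. std_normal_density ((v::real^'k::finite) $ k)) = (1 / sqrt (2 * pi)) ^ CARD('k) * exp (- (v \<bullet> v) / 2)"
proof -
  have "(\<Prod>k\<in>UNIV. std_normal_density (v $ k)) = (\<Prod>k\<in>UNIV. (1 / sqrt (2 * pi)) * exp (- (v $ k)\<^sup>2 / 2))"
    by (simp add: std_normal_density_def)
  also have "\<dots> = (1 / sqrt (2 * pi)) ^ CARD('k) * (\<Prod>k\<in>UNIV. exp (- (v $ k)\<^sup>2 / 2))"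
    unfolding prod.distrib prod_constant by simp
  also have "(\<Prod>k\<in>UNIV. exp (- (v $ k)\<^sup>2 / 2)) = exp (\<Sum>k\<in>UNIV. - (v $ k)\<^sup>2 / 2)"
    by (simp add: exp_sum)
  also have "(\<Sum>k\<in>UNIV. - (v $ k)\<^sup>2 / 2) = - (v \<bullet> v) / 2"
    by (simp add: inner_vec_def power2_eq_square sum_divide_distrib sum_negf)
  finally show ?thesis .
qed




lemma nn_integral_vec_prod:
  fixes F :: "'k::finite \<Rightarrow> real \<Rightarrow> ennreal"
  assumes [measurable]: "\<And>k. F k \<in> borel_measurable borel"
  shows "(\<integral>\<^sup>+v. (\<Prod>k\<in>UNIV. F k ((v::real^'k) $ k)) \<partial>lborel) = (\<Prod>k\<in>UNIV. \<integral>\<^sup>+x. F k x \<partial>lborel)"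
proof -
  define idx where "idx b = (SOME k. b = axis k (1::real))" for b :: "real^'k"
  have idx: "idx (axis k 1) = k" for k
    unfolding idx_def by (rule some_equality) (auto simp: axis_eq_axis)
  have inj: "inj (\<lambda>k::'k. axis k (1::real))" by (auto simp: inj_def axis_eq_axis)
  have B: "(Basis :: (real^'k) set) = (\<lambda>k. axis k 1) ` UNIV" by (auto simp: Basis_vec_def)
  have "(\<Prod>k\<in>UNIV. F k (v $ k)) = (\<Prod>b\<in>Basis. F (idx b) (v \<bullet> b))" for v :: "real^'k"
    unfolding B by (subst prod.reindex[OF inj]) (simp add: idx cart_eq_inner_axis)
  then have "(\<integral>\<^sup>+v. (\<Prod>k\<in>UNIV. F k ((v::real^'k) $ k)) \<partial>lborel) = (\<integral>\<^sup>+v. (\<Prod>b\<in>Basis. F (idx b) (v \<bullet> b)) \<partial>lborel)"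
    by simp
  also have "\<dots> = (\<Prod>b\<in>Basis. \<integral>\<^sup>+x. F (idx b) x \<partial>lborel)"
    by (rule nn_integral_lborel_prod) auto
  also have "\<dots> = (\<Prod>k\<in>UNIV. \<integral>\<^sup>+x. F k x \<partial>lborel)"
    unfolding B by (subst prod.reindex[OF inj]) (simp add: idx)
  finally show ?thesis .
qed




lemma prob_std_gauss: "prob_space std_gauss"
  unfolding std_gauss_def by (rule prob_space_normal_density) simp

lemma sets_std_gauss[simp, measurable_cong]: "sets std_gauss = sets borel"
  by (simp add: std_gauss_def)

lemma space_std_gauss[simp]: "space std_gauss = UNIV"
  by (simp add: std_gauss_def)

lemma GK_eq:
  "PiM (UNIV::'k::finite set) (\<lambda>_. std_gauss) =
   distr (density lborel (\<lambda>v::real^'k. ennreal (\<Prod>k\<in>UNIV. std_normal_density (v$k)))) (PiM UNIV (\<lambda>_. std_gauss)) vec_nth"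
  (is "?P = distr ?D _ _")
proof -
  interpret product_prob_space "\<lambda>_::'k. std_gauss" UNIV
    by (simp add: product_prob_space_def product_sigma_finite_def prob_std_gauss prob_space_imp_sigma_finite
        product_prob_space_axioms_def)
  have vm: "vec_nth \<in> measurable ?D ?P"
    by (simp add: measurable_cong_sets[OF _ sets_PiM_cong[OF refl sets_std_gauss]])
  show ?thesis
  proof (rule PiM_eqI[symmetric])
    show "sets (distr ?D ?P vec_nth) = sets ?P" by simp
    fix A :: "'k \<Rightarrow> real set" assume A: "\<And>i. i \<in> UNIV \<Longrightarrow> A i \<in> sets std_gauss"
    have Ab[measurable]: "A i \<in> sets borel" for i using A by simp
    have PA: "Pi\<^sub>E UNIV A \<in> sets ?P" using A by (intro sets_PiM_I_finite) auto
    have pre: "vec_nth -` Pi\<^sub>E UNIV A = {v::real^'k. \<forall>k. v $ k \<in> A k}"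
      by (auto simp: PiE_def Pi_def)
    have "{v::real^'k. \<forall>k. v $ k \<in> A k} \<in> sets borel" by measurable
    have ind: "indicator {v::real^'k. \<forall>k. v $ k \<in> A k} v = (\<Prod>k\<in>UNIV. indicator (A k) (v $ k) :: ennreal)" for v
    proof (cases "\<forall>k. v $ k \<in> A k")
      case True then show ?thesis by (simp add: indicator_def)
    next
      case False
      then obtain k where "v $ k \<notin> A k" by blast
      then have "(\<Prod>k\<in>UNIV. indicator (A k) (v $ k) :: ennreal) = 0"
        by (intro prod_zero) (auto intro!: exI[of _ k])
      with False show ?thesis by (simp add: indicator_def)
    qed
    have "emeasure (distr ?D ?P vec_nth) (Pi\<^sub>E UNIV A) = emeasure ?D {v::real^'k. \<forall>k. v $ k \<in> A k}"
      using vm PA by (subst emeasure_distr) (auto simp: pre)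
    also have "\<dots> = (\<integral>\<^sup>+v. ennreal (\<Prod>k\<in>UNIV. std_normal_density (v$k)) * indicator {v::real^'k. \<forall>k. v $ k \<in> A k} v \<partial>lborel)"
      using \<open>{v::real^'k. \<forall>k. v $ k \<in> A k} \<in> sets borel\<close> by (subst emeasure_density) auto
    also have "\<dots> = (\<integral>\<^sup>+v. (\<Prod>k\<in>UNIV. ennreal (std_normal_density (v$k)) * indicator (A k) (v $ k)) \<partial>lborel)"
      by (intro nn_integral_cong) (simp add: ind prod_ennreal[symmetric] prod.distrib)
    also have "\<dots> = (\<Prod>k\<in>UNIV. \<integral>\<^sup>+x. ennreal (std_normal_density x) * indicator (A k) x \<partial>lborel)"
      by (rule nn_integral_vec_prod) measurable
    also have "\<dots> = (\<Prod>k\<in>UNIV. emeasure std_gauss (A k))"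
      unfolding std_gauss_def by (intro prod.cong refl, subst emeasure_density) auto
    finally show "emeasure (distr ?D ?P vec_nth) (Pi\<^sub>E UNIV A) = (\<Prod>k\<in>UNIV. emeasure std_gauss (A k))" .
  qed simp
qed



lemma dens_orth:
  fixes Q :: "real^'k::{finite,wellorder} \<Rightarrow> real^'k::_"
  assumes Q: "orthogonal_transformation Q"
  shows "distr (density lborel (\<lambda>v::real^'k::_. ennreal (\<Prod>k\<in>UNIV. std_normal_density (v$k)))) borel Q
       = density lborel (\<lambda>v::real^'k::_. ennreal (\<Prod>k\<in>UNIV. std_normal_density (v$k)))"
  (is "distr ?D _ _ = _")
proof -
  let ?g = "\<lambda>v::real^'k::_. ennreal (\<Prod>k\<in>UNIV. std_normal_density (v$k))"
  have lin: "linear Q" using Q by (rule orthogonal_transformation_linear)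
  have Qm[measurable]: "Q \<in> borel_measurable borel"
    using lin by (intro borel_measurable_continuous_onI linear_continuous_on) (simp add: linear_conv_bounded_linear)
  have gQ: "?g (Q v) = ?g v" for v
    using Q by (simp add: gdens_eq orthogonal_transformation_def)
  show ?thesis
  proof (rule measure_eqI)
    show "sets (distr ?D borel Q) = sets ?D" by simp
    fix A assume "A \<in> sets (distr ?D borel Q)"
    then have A[measurable]: "A \<in> sets borel" by simp
    have "emeasure (distr ?D borel Q) A = emeasure ?D (Q -` A)"
      by (subst emeasure_distr) auto
    also have "\<dots> = (\<integral>\<^sup>+v. ?g v * indicator (Q -` A) v \<partial>lborel)"
      by (subst emeasure_density) (auto intro: measurable_sets_borel[OF Qm A, simplified])
    also have "\<dots> = (\<integral>\<^sup>+v. ?g (Q v) * indicator A (Q v) \<partial>lborel)"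
      by (intro nn_integral_cong) (simp add: gQ indicator_def)
    also have "\<dots> = (\<integral>\<^sup>+w. ?g w * indicator A w \<partial>(distr lborel borel Q))"
      by (subst nn_integral_distr) auto
    also have "\<dots> = (\<integral>\<^sup>+w. ?g w * indicator A w \<partial>lborel)"
      by (simp add: lborel_orth[OF Q])
    also have "\<dots> = emeasure ?D A"
      by (subst emeasure_density) auto
    finally show "emeasure (distr ?D borel Q) A = emeasure ?D A" .
  qed
qed

lemma GK_orth:
  fixes Q :: "real^'k::{finite,wellorder} \<Rightarrow> real^'k::_"
  assumes Q: "orthogonal_transformation Q"
  shows "distr (PiM UNIV (\<lambda>_. std_gauss)) (PiM UNIV (\<lambda>_. std_gauss)) (\<lambda>s k. \<Sum>l\<in>UNIV. matrix Q $ k $ l * s l)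
       = PiM (UNIV::'k::_ set) (\<lambda>_. std_gauss)"
proof -
  let ?D = "density lborel (\<lambda>v::real^'k::_. ennreal (\<Prod>k\<in>UNIV. std_normal_density (v$k)))"
  let ?P = "PiM (UNIV::'k::_ set) (\<lambda>_. std_gauss)"
  let ?T = "\<lambda>(s::'k::_ \<Rightarrow> real) k. \<Sum>l\<in>UNIV. matrix Q $ k $ l * s l"
  have lin: "linear Q" using Q by (rule orthogonal_transformation_linear)
  have Qm[measurable]: "Q \<in> borel_measurable borel"
    using lin by (intro borel_measurable_continuous_onI linear_continuous_on) (simp add: linear_conv_bounded_linear)
  have vm[measurable]: "vec_nth \<in> measurable ?D ?P"
    by (simp add: measurable_cong_sets[OF _ sets_PiM_cong[OF refl sets_std_gauss]])
  have vm': "vec_nth \<in> measurable borel ?P"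
    by (simp add: measurable_cong_sets[OF _ sets_PiM_cong[OF refl sets_std_gauss]])
  have Tm: "?T \<in> measurable ?P ?P"
    by (rule measurable_PiM_single') (auto simp: space_PiM)
  have TQ: "?T (vec_nth v) = vec_nth (Q v)" for v
  proof -
    have "Q v = matrix Q *v v" using lin by (simp add: matrix_works)
    then show ?thesis by (auto simp: matrix_vector_mult_def fun_eq_iff)
  qed
  have "distr ?P ?P ?T = distr (distr ?D ?P vec_nth) ?P ?T"
    by (subst GK_eq[symmetric]) (rule refl)
  also have "\<dots> = distr ?D ?P (?T \<circ> vec_nth)"
    by (rule distr_distr[OF Tm vm])
  also have "\<dots> = distr ?D ?P (vec_nth \<circ> Q)"
    by (intro distr_cong) (auto simp: TQ)
  also have "\<dots> = distr (distr ?D borel Q) ?P vec_nth"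
    by (rule distr_distr[symmetric]) (auto intro: vm')
  also have "\<dots> = ?P"
    by (simp add: dens_orth[OF Q] GK_eq[symmetric])
  finally show ?thesis .
qed




lemma householder_orth:
  fixes a :: "'v::euclidean_space"
  shows "orthogonal_transformation (\<lambda>z. z - (2 * (a \<bullet> z) / (a \<bullet> a)) *\<^sub>R a)"
proof (cases "a = 0")
  case True then show ?thesis by simp
next
  case False
  then have aa: "a \<bullet> a \<noteq> 0" by simp
  show ?thesis
    unfolding orthogonal_transformation_def
  proof (intro conjI allI)
    show "linear (\<lambda>z. z - (2 * (a \<bullet> z) / (a \<bullet> a)) *\<^sub>R a)"
      by (intro linearI) (auto simp: inner_add_right scaleR_add_left add_divide_distrib algebra_simps)
    fix v w :: 'v
    show "(v - (2 * (a \<bullet> v) / (a \<bullet> a)) *\<^sub>R a) \<bullet> (w - (2 * (a \<bullet> w) / (a \<bullet> a)) *\<^sub>R a) = v \<bullet> w"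
      using aa by (simp add: inner_diff_left inner_diff_right inner_commute field_simps)
  qed
qed

lemma exists_orth_map:
  fixes V U :: "'i \<Rightarrow> 'v::euclidean_space"
  assumes "finite I" "\<And>a b. a \<in> I \<Longrightarrow> b \<in> I \<Longrightarrow> V a \<bullet> V b = U a \<bullet> U b"
  shows "\<exists>Q. orthogonal_transformation Q \<and> (\<forall>a\<in>I. Q (V a) = U a)"
  using assms
proof (induction I rule: finite_induct)
  case empty
  show ?case by (rule exI[of _ "\<lambda>x. x"]) simp
next
  case (insert c I)
  then obtain Q where Q: "orthogonal_transformation Q" "\<forall>a\<in>I. Q (V a) = U a"
    by auto
  define y where "y = Q (V c)"
  define a0 where "a0 = y - U c"
  define H where "H = (\<lambda>z. z - (2 * (a0 \<bullet> z) / (a0 \<bullet> a0)) *\<^sub>R a0)"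
  have H: "orthogonal_transformation H" unfolding H_def by (rule householder_orth)
  have yy: "y \<bullet> y = U c \<bullet> U c"
    using Q(1) insert.prems[of c c] unfolding y_def orthogonal_transformation_def by simp
  have ortho: "a0 \<bullet> U a = 0" if "a \<in> I" for a
  proof -
    have "y \<bullet> U a = V c \<bullet> V a"
      using Q that unfolding y_def orthogonal_transformation_def by metis
    also have "\<dots> = U c \<bullet> U a" using insert.prems that by auto
    finally show ?thesis unfolding a0_def by (simp add: inner_diff_left)
  qed
  have HU: "H (U a) = U a" if "a \<in> I" for a
    unfolding H_def using ortho[OF that] by simp
  have Hy: "H y = U c"
  proof (cases "a0 = 0")
    case True then show ?thesis unfolding H_def a0_def by simp
  next
    case False
    then have aa: "a0 \<bullet> a0 \<noteq> 0" by simp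
    have "a0 \<bullet> a0 = 2 * (a0 \<bullet> y)"
      unfolding a0_def using yy by (simp add: inner_diff_left inner_diff_right inner_commute)
    then have "2 * (a0 \<bullet> y) / (a0 \<bullet> a0) = 1" using aa by (metis divide_self)
    then have "H y = y - a0" unfolding H_def by (simp only: scaleR_one)
    then show ?thesis unfolding a0_def by simp
  qed
  show ?case
  proof (intro exI[of _ "H \<circ> Q"] conjI)
    show "orthogonal_transformation (H \<circ> Q)" using H Q(1) by (rule orthogonal_transformation_compose)
    show "\<forall>a\<in>insert c I. (H \<circ> Q) (V a) = U a"
      using Q(2) HU Hy unfolding y_def by auto
  qed
qed




lemma measurable_vec_lambda_real:
  assumes "\<And>j. (\<lambda>x. h x j) \<in> borel_measurable M"
  shows "(\<lambda>x. (\<chi> j. h x j) :: real^'d::finite) \<in> borel_measurable M"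
  unfolding borel_measurable_euclidean_space[where 'c="real^'d"]
  using assms by (auto simp: Basis_vec_def inner_axis)

lemma meas_PiM_gauss[simp]:
  "measurable (PiM I (\<lambda>_. std_gauss)) N = measurable (PiM I (\<lambda>_. borel)) N"
  by (rule measurable_cong_sets) (auto intro!: sets_PiM_cong)

lemma gauss_proj_meas:
  "(\<lambda>r. gauss_proj r v) \<in> borel_measurable (PiM UNIV (\<lambda>_. std_gauss) :: ('d::finite \<times> 'n::finite \<Rightarrow> real) measure)"
  unfolding gauss_proj_def meas_PiM_gauss by (rule measurable_vec_lambda_real) measurable

lemma embed_integral:
  fixes \<iota> :: "'a::finite \<Rightarrow> 'k::finite" and Phi :: "('a \<Rightarrow> real) \<Rightarrow> real"
  assumes inj: "inj \<iota>" and Phi[measurable]: "Phi \<in> borel_measurable (PiM UNIV (\<lambda>_. borel))"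
  shows "(\<integral>r. Phi r \<partial>(PiM UNIV (\<lambda>_. std_gauss) :: ('a \<Rightarrow> real) measure))
       = (\<integral>s. Phi (\<lambda>a. s (\<iota> a)) \<partial>(PiM UNIV (\<lambda>_. std_gauss) :: ('k \<Rightarrow> real) measure))"
proof -
  let ?t = "\<lambda>\<omega>. \<lambda>a. \<omega> (\<iota> a)"
  have d: "distr (PiM (UNIV::'k set) (\<lambda>_. std_gauss)) (PiM (UNIV::'a set) (\<lambda>_. std_gauss)) ?t
     = PiM (UNIV::'a set) (\<lambda>_. std_gauss)"
  proof -
    have e: "(\<lambda>\<omega>. \<lambda>n\<in>UNIV. \<omega> (\<iota> n)) = ?t" by (auto simp: restrict_def fun_eq_iff)
    show ?thesis using distr_PiM_reindex[of UNIV "\<lambda>_. std_gauss" \<iota> UNIV] inj prob_std_gauss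
      unfolding e by simp
  qed
  have m: "?t \<in> measurable (PiM (UNIV::'k set) (\<lambda>_. std_gauss)) (PiM (UNIV::'a set) (\<lambda>_. std_gauss))"
    by (rule measurable_PiM_single') (auto simp: space_PiM)
  have Phi': "Phi \<in> borel_measurable (PiM (UNIV::'a set) (\<lambda>_. std_gauss))"
    using Phi by simp
  have "(\<integral>s. Phi (?t s) \<partial>(PiM UNIV (\<lambda>_. std_gauss) :: ('k \<Rightarrow> real) measure))
     = (\<integral>r. Phi r \<partial>distr (PiM (UNIV::'k set) (\<lambda>_. std_gauss)) (PiM (UNIV::'a set) (\<lambda>_. std_gauss)) ?t)"
    by (rule integral_distr[symmetric, OF m Phi'])
  then show ?thesis unfolding d by (rule sym)
qed




definition emb :: "('d \<times> 'n \<Rightarrow> 'k) \<Rightarrow> 'd \<Rightarrow> real^'n::finite \<Rightarrow> real^'k::finite" where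
  "emb \<iota> j v = (\<chi> k. \<Sum>l\<in>UNIV. if \<iota> (j, l) = k then v $ l else 0)"

lemma emb_dot: "(\<Sum>k\<in>UNIV. s k * emb \<iota> j v $ k) = (\<Sum>l\<in>UNIV. s (\<iota> (j, l)) * v $ l)"
proof -
  have "(\<Sum>k\<in>UNIV. s k * emb \<iota> j v $ k) = (\<Sum>k\<in>UNIV. \<Sum>l\<in>UNIV. if \<iota> (j, l) = k then s k * v $ l else 0)"
    by (simp add: emb_def sum_distrib_left if_distrib cong: if_cong)
  also have "\<dots> = (\<Sum>l\<in>UNIV. \<Sum>k\<in>UNIV. if \<iota> (j, l) = k then s k * v $ l else 0)"
    by (rule sum.swap)
  also have "\<dots> = (\<Sum>l\<in>UNIV. s (\<iota> (j, l)) * v $ l)"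
    by (simp add: sum.delta)
  finally show ?thesis .
qed

lemma emb_inner:
  assumes "inj \<iota>"
  shows "emb \<iota> j v \<bullet> emb \<iota> j' w = (if j = j' then v \<bullet> w else 0)"
proof -
  have "emb \<iota> j v \<bullet> emb \<iota> j' w = (\<Sum>k\<in>UNIV. emb \<iota> j' w $ k * emb \<iota> j v $ k)"
    by (simp add: inner_vec_def mult.commute)
  also have "\<dots> = (\<Sum>l\<in>UNIV. emb \<iota> j' w $ (\<iota> (j, l)) * v $ l)"
    by (rule emb_dot)
  also have "\<dots> = (\<Sum>l\<in>UNIV. (if j' = j then w $ l else 0) * v $ l)"
  proof (intro sum.cong refl)
    fix l
    have "emb \<iota> j' w $ (\<iota> (j, l)) = (\<Sum>l'\<in>UNIV. if (j', l') = (j, l) then w $ l' else 0)"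
      unfolding emb_def using assms by (simp add: inj_eq)
    also have "\<dots> = (if j' = j then w $ l else 0)"
      by (cases "j' = j") (simp_all add: sum.delta')
    finally show "emb \<iota> j' w $ (\<iota> (j, l)) * v $ l = (if j' = j then w $ l else 0) * v $ l" by simp
  qed
  also have "\<dots> = (if j = j' then v \<bullet> w else 0)"
    by (auto simp: inner_vec_def mult.commute)
  finally show ?thesis .
qed

lemma gauss_proj_emb: "gauss_proj (\<lambda>a. s (\<iota> a)) v = (\<chi> j. \<Sum>k\<in>UNIV. s k * emb \<iota> j v $ k)"
  unfolding gauss_proj_def by (simp add: emb_dot)

lemma card_prod': "CARD('a::finite \<times> 'b::finite) = CARD('a) * CARD('b)"
  by (simp flip: UNIV_Times_UNIV add: card_cartesian_product)

lemma card_ok: "CARD('d::finite \<times> 'n::finite) \<le> CARD(('d \<times> 'n \<times> 'm::finite) bit0)"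
  "CARD('d::finite \<times> 'm::finite) \<le> CARD(('d \<times> 'n::finite \<times> 'm) bit0)"
proof -
  have m: "CARD('m) \<ge> 1" and n: "CARD('n) \<ge> 1" by (simp_all add: Suc_leI)
  have "CARD('d) * CARD('n) * 1 \<le> CARD('d) * CARD('n) * CARD('m)" using m by (intro mult_le_mono2)
  then show "CARD('d::finite \<times> 'n::finite) \<le> CARD(('d \<times> 'n \<times> 'm::finite) bit0)"
    by (simp add: card_prod' mult.assoc)
  have "CARD('d) * 1 * CARD('m) \<le> CARD('d) * CARD('n) * CARD('m)" using n by (intro mult_le_mono1 mult_le_mono2)
  then show "CARD('d::finite \<times> 'm::finite) \<le> CARD(('d \<times> 'n::finite \<times> 'm) bit0)"
    by (simp add: card_prod' mult.assoc)
qed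




lemma prod_f_meas:
  fixes f :: "real^'d::finite \<Rightarrow> real" and c :: "nat \<Rightarrow> 'd \<Rightarrow> 'k::finite \<Rightarrow> real"
  assumes fm[measurable]: "f \<in> borel_measurable borel"
  shows "(\<lambda>s. \<Prod>i<n. f (\<chi> j. \<Sum>k\<in>UNIV. s k * c i j k)) \<in> borel_measurable (PiM (UNIV::'k set) (\<lambda>_. borel))"
proof -
  have "(\<lambda>s. (\<chi> j. \<Sum>k\<in>UNIV. s k * c i j k) :: real^'d) \<in> borel_measurable (PiM (UNIV::'k set) (\<lambda>_. borel))" for i
    by (rule measurable_vec_lambda_real) measurable
  then show ?thesis by measurable
qed

lemma embed_step:
  fixes f :: "real^'d::finite \<Rightarrow> real" and vs :: "(real^'n::finite) list" and \<iota> :: "'d \<times> 'n \<Rightarrow> 'k::finite"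
  assumes fm[measurable]: "f \<in> borel_measurable borel" and inj: "inj \<iota>"
  shows "(\<integral>r. (\<Prod>i<length vs. f (gauss_proj r (vs!i))) \<partial>(PiM UNIV (\<lambda>_. std_gauss) :: ('d \<times> 'n \<Rightarrow> real) measure))
       = (\<integral>s. (\<Prod>i<length vs. f (\<chi> j. \<Sum>k\<in>UNIV. s k * emb \<iota> j (vs!i) $ k)) \<partial>(PiM UNIV (\<lambda>_. std_gauss) :: ('k \<Rightarrow> real) measure))"
proof -
  have m: "(\<lambda>r. \<Prod>i<length vs. f (gauss_proj r (vs!i))) \<in> borel_measurable (PiM (UNIV::('d \<times> 'n) set) (\<lambda>_. borel))"
    using gauss_proj_meas[where 'd='d and 'n='n] by simp
  show ?thesis
    by (subst embed_integral[OF inj m]) (simp add: gauss_proj_emb)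
qed

lemma gram_inv:
  fixes f :: "real^'d::finite \<Rightarrow> real" and vs :: "(real^'n::finite) list" and ws :: "(real^'m::finite) list"
  assumes fm[measurable]: "f \<in> borel_measurable borel"
    and len: "length ws = length vs"
    and gram: "\<And>i j. i < length vs \<Longrightarrow> j < length vs \<Longrightarrow> vs!i \<bullet> vs!j = ws!i \<bullet> ws!j"
  shows "(\<integral>r. (\<Prod>i<length vs. f (gauss_proj r (vs!i))) \<partial>(PiM UNIV (\<lambda>_. std_gauss) :: ('d \<times> 'n \<Rightarrow> real) measure))
       = (\<integral>r. (\<Prod>i<length ws. f (gauss_proj r (ws!i))) \<partial>(PiM UNIV (\<lambda>_. std_gauss) :: ('d \<times> 'm \<Rightarrow> real) measure))"
proof -
  obtain \<iota>N :: "'d \<times> 'n \<Rightarrow> ('d \<times> 'n \<times> 'm) bit0" where iN: "inj \<iota>N"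
    using card_le_inj[of "UNIV::('d \<times> 'n) set" "UNIV::('d \<times> 'n \<times> 'm) bit0 set"] card_ok(1) by auto
  obtain \<iota>M :: "'d \<times> 'm \<Rightarrow> ('d \<times> 'n \<times> 'm) bit0" where iM: "inj \<iota>M"
    using card_le_inj[of "UNIV::('d \<times> 'm) set" "UNIV::('d \<times> 'n \<times> 'm) bit0 set"] card_ok(2) by auto
  define V where "V = (\<lambda>(i, j). emb \<iota>N j (vs!i))"
  define U where "U = (\<lambda>(i, j). emb \<iota>M j (ws!i))"
  have "\<exists>Q. orthogonal_transformation Q \<and> (\<forall>a\<in>{..<length vs} \<times> UNIV. Q (V a) = U a)"
  proof (rule exists_orth_map)
    fix a b assume "a \<in> {..<length vs} \<times> (UNIV::'d set)" "b \<in> {..<length vs} \<times> (UNIV::'d set)"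
    then show "V a \<bullet> V b = U a \<bullet> U b"
      using gram by (auto simp: V_def U_def emb_inner[OF iN] emb_inner[OF iM])
  qed simp
  then obtain Q where Q: "orthogonal_transformation Q" and QVU: "\<And>i j. i < length vs \<Longrightarrow> Q (V (i, j)) = U (i, j)"
    by auto
  define A where "A = matrix Q"
  define Q2 where "Q2 = (\<lambda>x. transpose A *v x)"
  have Q2: "orthogonal_transformation Q2"
    using Q unfolding Q2_def A_def orthogonal_transformation_matrix
    by (simp add: orthogonal_matrix_transpose matrix_vector_mul_linear)
  have mQ2: "matrix Q2 = transpose A" unfolding Q2_def by simp
  let ?T = "\<lambda>(s::('d \<times> 'n \<times> 'm) bit0 \<Rightarrow> real) k. \<Sum>l\<in>UNIV. matrix Q2 $ k $ l * s l"
  have Tdot: "(\<Sum>k\<in>UNIV. s k * Q v $ k) = (\<Sum>k\<in>UNIV. ?T s k * v $ k)" for s v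
  proof -
    have "Q v = A *v v" unfolding A_def using Q by (simp add: matrix_works orthogonal_transformation_linear)
    then have "(\<Sum>k\<in>UNIV. s k * Q v $ k) = (\<Sum>k\<in>UNIV. \<Sum>l\<in>UNIV. s k * (A $ k $ l * v $ l))"
      by (simp add: matrix_vector_mult_def sum_distrib_left)
    also have "\<dots> = (\<Sum>l\<in>UNIV. \<Sum>k\<in>UNIV. s k * (A $ k $ l * v $ l))"
      by (rule sum.swap)
    also have "\<dots> = (\<Sum>k\<in>UNIV. ?T s k * v $ k)"
      by (simp add: mQ2 transpose_def sum_distrib_left mult_ac)
    finally show ?thesis .
  qed
  let ?G = "PiM UNIV (\<lambda>_. std_gauss) :: (('d \<times> 'n \<times> 'm) bit0 \<Rightarrow> real) measure"
  let ?PhiV = "\<lambda>s. \<Prod>i<length vs. f (\<chi> j. \<Sum>k\<in>UNIV. s k * V (i, j) $ k)"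
  have PhiVm: "?PhiV \<in> borel_measurable ?G"
    using prod_f_meas[OF fm, where n="length vs" and c="\<lambda>i j k. V (i, j) $ k"] by simp
  have Tm: "?T \<in> measurable ?G ?G"
    by (simp, rule measurable_PiM_single') (auto simp: space_PiM)
  have "(\<integral>r. (\<Prod>i<length vs. f (gauss_proj r (vs!i))) \<partial>(PiM UNIV (\<lambda>_. std_gauss) :: ('d \<times> 'n \<Rightarrow> real) measure))
      = (\<integral>s. ?PhiV s \<partial>?G)"
    unfolding V_def by (simp add: embed_step[OF fm iN])
  also have "\<dots> = (\<integral>s. ?PhiV s \<partial>distr ?G ?G ?T)"
    using GK_orth[OF Q2] by simp
  also have "\<dots> = (\<integral>s. ?PhiV (?T s) \<partial>?G)"
    by (rule integral_distr[OF Tm PhiVm])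
  also have "\<dots> = (\<integral>s. (\<Prod>i<length vs. f (\<chi> j. \<Sum>k\<in>UNIV. s k * U (i, j) $ k)) \<partial>?G)"
    by (intro Bochner_Integration.integral_cong refl prod.cong) (simp add: Tdot[symmetric] QVU)
  also have "\<dots> = (\<integral>r. (\<Prod>i<length ws. f (gauss_proj r (ws!i))) \<partial>(PiM UNIV (\<lambda>_. std_gauss) :: ('d \<times> 'm \<Rightarrow> real) measure))"
    using embed_step[OF fm iM, of ws] len by (simp add: U_def)
  finally show ?thesis .
qed




lemma prob_unif01: "prob_space unif01"
  unfolding unif01_def by (intro prob_space_uniform_measure) auto

lemma sets_unif01[simp, measurable_cong]: "sets unif01 = sets borel"
  by (simp add: unif01_def)

lemma coin_integral:
  assumes "0 \<le> p" "p \<le> 1"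
  shows "(\<integral>t. (if t \<le> p then 1 else -1 :: real) \<partial>unif01) = 2 * p - 1"
proof -
  interpret prob_space unif01 by (rule prob_unif01)
  have e: "(\<lambda>t. if t \<le> p then 1 else -1 :: real) = (\<lambda>t. 2 * indicator {..p} t - 1)"
    by (auto simp: indicator_def fun_eq_iff)
  have int: "integrable unif01 (indicator {..p} :: real \<Rightarrow> real)"
    by (rule integrable_const_bound[where B=1]) auto
  have "measure unif01 {..p} = measure lborel ({0..1} \<inter> {..p}) / measure lborel {0..1::real}"
    unfolding unif01_def by (subst measure_uniform_measure) auto
  also have "\<dots> = p" using assms by simp
  finally have m: "measure unif01 {..p} = p" .
  show ?thesis
    unfolding e using int by (simp add: m prob_space)
qed



lemma round_corr_eq:
  fixes f :: "real^'d::finite \<Rightarrow> real" and vs :: "(real^'n::finite) list"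
  assumes fm[measurable]: "f \<in> borel_measurable borel" and fb: "\<And>y. -1 \<le> f y \<and> f y \<le> 1"
  shows "round_corr f vs = (\<integral>r. (\<Prod>i<length vs. f (gauss_proj r (vs!i))) \<partial>(PiM UNIV (\<lambda>_. std_gauss) :: ('d \<times> 'n \<Rightarrow> real) measure))"
proof -
  let ?k = "length vs"
  let ?G = "PiM UNIV (\<lambda>_. std_gauss) :: ('d \<times> 'n \<Rightarrow> real) measure"
  let ?U = "PiM {..<?k} (\<lambda>_. unif01)"
  interpret G: prob_space ?G by (intro prob_space_PiM prob_std_gauss)
  interpret U: prob_space ?U by (intro prob_space_PiM prob_unif01)
  interpret P: pair_prob_space ?G ?U ..
  interpret UP: product_prob_space "\<lambda>_. unif01" "{..<?k}"
    by (simp add: product_prob_space_def product_sigma_finite_def prob_unif01 prob_space_imp_sigma_finite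
        product_prob_space_axioms_def)
  interpret C: prob_space unif01 by (rule prob_unif01)
  let ?p = "\<lambda>r i. (1 + f (gauss_proj r (vs ! i))) / 2"
  have gp[measurable]: "(\<lambda>r. gauss_proj r v) \<in> borel_measurable ?G" for v
    by (rule gauss_proj_meas)
  have Xm: "(\<lambda>\<omega>. round_X f vs i \<omega>) \<in> borel_measurable (?G \<Otimes>\<^sub>M ?U)" if "i < ?k" for i
  proof -
    have a[measurable]: "(\<lambda>\<omega>. snd \<omega> i) \<in> borel_measurable (?G \<Otimes>\<^sub>M ?U)"
      using that by (intro measurable_compose[OF measurable_snd] measurable_component_singleton) auto
    have b[measurable]: "(\<lambda>\<omega>. (1 + f (gauss_proj (fst \<omega>) (vs ! i))) / 2) \<in> borel_measurable (?G \<Otimes>\<^sub>M ?U)"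
      by (intro borel_measurable_divide borel_measurable_add borel_measurable_const
           measurable_compose[OF measurable_fst] measurable_compose[OF gp fm])
    show ?thesis unfolding round_X_def by measurable
  qed
  have Fm: "(\<lambda>\<omega>. \<Prod>i<?k. round_X f vs i \<omega>) \<in> borel_measurable (?G \<Otimes>\<^sub>M ?U)"
    by (rule borel_measurable_prod) (auto intro: Xm)
  have Fint: "integrable (?G \<Otimes>\<^sub>M ?U) (\<lambda>\<omega>. \<Prod>i<?k. round_X f vs i \<omega>)"
    by (rule P.integrable_const_bound[where B=1]) (auto simp: round_X_def abs_prod prod_le_1 intro: Fm)
  have inner: "(\<integral>u. (\<Prod>i<?k. round_X f vs i (r, u)) \<partial>?U) = (\<Prod>i<?k. f (gauss_proj r (vs!i)))" for r
  proof -
    have "(\<integral>u. (\<Prod>i<?k. round_X f vs i (r, u)) \<partial>?U)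
        = (\<integral>u. (\<Prod>i\<in>{..<?k}. (\<lambda>i t. if t \<le> ?p r i then 1 else -1 :: real) i (u i)) \<partial>?U)"
      by (simp add: round_X_def)
    also have "\<dots> = (\<Prod>i\<in>{..<?k}. \<integral>t. (if t \<le> ?p r i then 1 else -1 :: real) \<partial>unif01)"
      by (rule UP.product_integral_prod) (auto intro!: finite_measure.integrable_const_bound[OF prob_unif01[unfolded prob_space_def, THEN conjunct1], where B=1])
    also have "\<dots> = (\<Prod>i<?k. f (gauss_proj r (vs!i)))"
    proof (intro prod.cong refl)
      fix i
      have "0 \<le> ?p r i" "?p r i \<le> 1" using fb[of "gauss_proj r (vs ! i)"] by auto
      then show "(\<integral>t. (if t \<le> ?p r i then 1 else -1 :: real) \<partial>unif01) = f (gauss_proj r (vs!i))"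
        using coin_integral[of "?p r i"] by (simp add: field_simps)
    qed
    finally show ?thesis .
  qed
  have "round_corr f vs = (\<integral>\<omega>. (\<Prod>i<?k. round_X f vs i \<omega>) \<partial>(?G \<Otimes>\<^sub>M ?U))"
    by (simp add: round_corr_def round_space_def)
  also have "\<dots> = (\<integral>r. (\<integral>u. (\<Prod>i<?k. round_X f vs i (r, u)) \<partial>?U) \<partial>?G)"
    by (rule P.integral_fst'[OF Fint, symmetric])
  also have "\<dots> = (\<integral>r. (\<Prod>i<?k. f (gauss_proj r (vs!i))) \<partial>?G)"
    by (simp add: inner)
  finally show ?thesis .
qed




lemma prob_GK: "prob_space (PiM I (\<lambda>_. std_gauss))"
  by (intro prob_space_PiM prob_std_gauss)

lemma curry_gauss:
  "distr (PiM (UNIV::'c::finite set) (\<lambda>_. PiM (UNIV::'d::finite set) (\<lambda>_. std_gauss))) (PiM UNIV (\<lambda>_::'d\<times>'c. std_gauss))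
      (\<lambda>Y a. Y (snd a) (fst a)) = PiM UNIV (\<lambda>_. std_gauss)"
  (is "distr ?Y ?P ?t = _")
proof -
  interpret P: product_sigma_finite "\<lambda>_::'d\<times>'c. std_gauss"
    by (simp add: product_sigma_finite_def prob_std_gauss prob_space_imp_sigma_finite)
  interpret D: product_sigma_finite "\<lambda>_::'d. std_gauss"
    by (simp add: product_sigma_finite_def prob_std_gauss prob_space_imp_sigma_finite)
  interpret Y: product_sigma_finite "\<lambda>_::'c. PiM (UNIV::'d set) (\<lambda>_. std_gauss)"
    by (simp add: product_sigma_finite_def prob_GK prob_space_imp_sigma_finite)
  have tm: "?t \<in> measurable ?Y ?P"
  proof (rule measurable_PiM_single')
    fix a :: "'d \<times> 'c"
    show "(\<lambda>\<omega>. ?t \<omega> a) \<in> measurable ?Y std_gauss"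
      apply (rule measurable_compose[where f="\<lambda>Y. Y (snd a)" and g="\<lambda>y. y (fst a)"])
       apply (rule measurable_component_singleton, simp)+
      done
  qed (auto simp: space_PiM)
  show ?thesis
  proof (rule P.PiM_eqI)
    show "sets (distr ?Y ?P ?t) = sets ?P" by simp
    fix A :: "'d \<times> 'c \<Rightarrow> real set" assume A: "\<And>i. i \<in> UNIV \<Longrightarrow> A i \<in> sets std_gauss"
    have pre: "?t -` Pi\<^sub>E UNIV A \<inter> space ?Y = Pi\<^sub>E UNIV (\<lambda>c. Pi\<^sub>E UNIV (\<lambda>j. A (j, c)))"
      by (auto simp: space_PiM PiE_def Pi_def)
    have "emeasure (distr ?Y ?P ?t) (Pi\<^sub>E UNIV A) = emeasure ?Y (Pi\<^sub>E UNIV (\<lambda>c. Pi\<^sub>E UNIV (\<lambda>j. A (j, c))))"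
      using tm A by (subst emeasure_distr) (auto simp: pre intro!: sets_PiM_I_finite)
    also have "\<dots> = (\<Prod>c\<in>UNIV. emeasure (PiM (UNIV::'d set) (\<lambda>_. std_gauss)) (Pi\<^sub>E UNIV (\<lambda>j. A (j, c))))"
      using A by (subst Y.emeasure_PiM) (auto intro!: sets_PiM_I_finite)
    also have "\<dots> = (\<Prod>c\<in>UNIV. \<Prod>j\<in>UNIV. emeasure std_gauss (A (j, c)))"
      using A by (intro prod.cong refl, subst D.emeasure_PiM) auto
    also have "\<dots> = (\<Prod>a\<in>UNIV. emeasure std_gauss (A a))"
      by (subst prod.swap) (simp add: prod.cartesian_product UNIV_Times_UNIV)
    finally show "emeasure (distr ?Y ?P ?t) (Pi\<^sub>E UNIV A) = (\<Prod>a\<in>UNIV. emeasure std_gauss (A a))" .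
  qed simp
qed




definition canon :: "real \<Rightarrow> 'e \<Rightarrow> real^('e::finite option)" where
  "canon x e = (\<chi> c. if c = None then sqrt x else if c = Some e then sqrt (1 - x) else 0)"

lemma canon_split: "canon x e $ c = (if c = None then sqrt x else 0) + (if c = Some e then sqrt (1 - x) else 0)"
  by (auto simp: canon_def)

lemma gauss_proj_canon:
  "gauss_proj r (canon x e) = (\<chi> j. sqrt x * r (j, None) + sqrt (1 - x) * r (j, Some e))"
  unfolding gauss_proj_def canon_split
  by (simp add: distrib_left sum.distrib if_distrib[of "\<lambda>t. _ * t"] sum.delta' mult.commute cong: if_cong)

lemma canon_inner:
  "canon x e \<bullet> canon x e' = x + (if e = e' then 1 - x else 0)" if "0 \<le> x" "x \<le> 1"
proof -
  have "canon x e \<bullet> canon x e' = (\<Sum>c\<in>UNIV. canon x e $ c * canon x e' $ c)"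
    by (simp add: inner_vec_def)
  also have "\<dots> = (\<Sum>c\<in>UNIV. (if c = None then x else 0) + (if e = e' then (if c = Some e then 1 - x else 0) else 0))"
    using that by (intro sum.cong refl) (auto simp: canon_def)
  also have "\<dots> = x + (if e = e' then 1 - x else 0)"
    by (simp add: sum.distrib sum.delta')
  finally show ?thesis .
qed




lemma canon_integral:
  fixes f :: "real^'d::finite \<Rightarrow> real"
  assumes fm[measurable]: "f \<in> borel_measurable borel" and fb: "\<And>y. -1 \<le> f y \<and> f y \<le> 1"
  shows "(\<integral>r. (\<Prod>e\<in>UNIV. f (gauss_proj r (canon x e))) \<partial>(PiM UNIV (\<lambda>_. std_gauss) :: ('d \<times> 'e::finite option \<Rightarrow> real) measure))
       = (\<integral>z. (\<integral>y. f (\<chi> j. sqrt x * z j + sqrt (1 - x) * y j) \<partial>(PiM UNIV (\<lambda>_. std_gauss) :: ('d \<Rightarrow> real) measure)) ^ CARD('e)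
             \<partial>(PiM UNIV (\<lambda>_. std_gauss) :: ('d \<Rightarrow> real) measure))"
proof -
  let ?Gd = "PiM UNIV (\<lambda>_. std_gauss) :: ('d \<Rightarrow> real) measure"
  let ?G = "PiM UNIV (\<lambda>_. std_gauss) :: ('d \<times> 'e option \<Rightarrow> real) measure"
  let ?S = "range (Some :: 'e \<Rightarrow> 'e option)"
  let ?Y = "PiM (UNIV :: 'e option set) (\<lambda>_. ?Gd)"
  let ?R = "PiM ?S (\<lambda>_. ?Gd)"
  define g where "g z y = f (\<chi> j. sqrt x * z j + sqrt (1 - x) * y j)" for z y :: "'d \<Rightarrow> real"
  define h where "h z = (\<integral>y. g z y \<partial>?Gd)" for z
  interpret Gd: prob_space ?Gd by (rule prob_GK)
  interpret R: prob_space ?R by (intro prob_space_PiM prob_GK)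
  interpret GR: pair_prob_space ?Gd ?R ..
  interpret RP: product_prob_space "\<lambda>_::'e option. ?Gd" ?S
    by (simp add: product_prob_space_def product_sigma_finite_def prob_GK prob_space_imp_sigma_finite
        product_prob_space_axioms_def)
  have gm: "(\<lambda>(z, y). g z y) \<in> borel_measurable (?Gd \<Otimes>\<^sub>M ?Gd)"
  proof -
    have "(\<lambda>(z::'d \<Rightarrow> real, y::'d \<Rightarrow> real). (\<chi> j. sqrt x * z j + sqrt (1 - x) * y j) :: real^'d) \<in> borel_measurable (?Gd \<Otimes>\<^sub>M ?Gd)"
      unfolding case_prod_beta by (rule measurable_vec_lambda_real) measurable
    then show ?thesis unfolding g_def case_prod_beta by measurable
  qed
  have gm2: "g z \<in> borel_measurable ?Gd" for z
    using measurable_Pair2[OF gm, of z] by (simp add: space_PiM)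
  have gb: "\<bar>g z y\<bar> \<le> 1" for z y using fb[of "\<chi> j. sqrt x * z j + sqrt (1 - x) * y j"] by (auto simp: g_def)
  have gint: "integrable ?Gd (g z)" for z
    by (rule Gd.integrable_const_bound[where B=1, OF _ gm2]) (simp add: gb)
  have Psim: "(\<lambda>Y. \<Prod>e\<in>UNIV. g (Y None) (Y (Some e))) \<in> borel_measurable ?Y"
  proof (rule borel_measurable_prod)
    fix e :: 'e
    have "(\<lambda>Y. (Y None, Y (Some e))) \<in> measurable ?Y (?Gd \<Otimes>\<^sub>M ?Gd)"
      by (intro measurable_Pair measurable_component_singleton) auto
    from measurable_compose[OF this gm] show "(\<lambda>Y. g (Y None) (Y (Some e))) \<in> borel_measurable ?Y" by simp
  qed
  have tm: "(\<lambda>Y a. Y (snd a) (fst a)) \<in> measurable ?Y ?G"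
  proof (rule measurable_PiM_single')
    fix a :: "'d \<times> 'e option"
    show "(\<lambda>\<omega>. \<omega> (snd a) (fst a)) \<in> measurable ?Y std_gauss"
      apply (rule measurable_compose[where f="\<lambda>Y. Y (snd a)" and g="\<lambda>y. y (fst a)"])
       apply (rule measurable_component_singleton, simp)+
      done
  qed (auto simp: space_PiM)
  have Phim: "(\<lambda>r. \<Prod>e\<in>UNIV. g (\<lambda>j. r (j, None)) (\<lambda>j. r (j, Some e))) \<in> borel_measurable ?G"
  proof (rule borel_measurable_prod)
    fix e :: 'e
    have "(\<lambda>r. ((\<lambda>j. r (j, None)), (\<lambda>j. r (j, Some e)))) \<in> measurable ?G (?Gd \<Otimes>\<^sub>M ?Gd)"
      by (intro measurable_Pair; rule measurable_PiM_single'; auto simp: space_PiM)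
    from measurable_compose[OF this gm] show "(\<lambda>r. g (\<lambda>j. r (j, None)) (\<lambda>j. r (j, Some e))) \<in> borel_measurable ?G" by simp
  qed
  have "(\<integral>r. (\<Prod>e\<in>UNIV. f (gauss_proj r (canon x e))) \<partial>?G)
      = (\<integral>r. (\<Prod>e\<in>UNIV. g (\<lambda>j. r (j, None)) (\<lambda>j. r (j, Some e))) \<partial>?G)"
    by (simp add: gauss_proj_canon g_def)
  also have "\<dots> = (\<integral>r. (\<Prod>e\<in>UNIV. g (\<lambda>j. r (j, None)) (\<lambda>j. r (j, Some e))) \<partial>distr ?Y ?G (\<lambda>Y a. Y (snd a) (fst a)))"
    by (simp only: curry_gauss)
  also have "\<dots> = (\<integral>Y. (\<Prod>e\<in>UNIV. g (Y None) (Y (Some e))) \<partial>?Y)"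
    by (subst integral_distr[OF tm Phim]) (simp add: eta_expand[symmetric])
  also have "\<dots> = (\<integral>z. (h z) ^ CARD('e) \<partial>?Gd)"
  proof -
    have U: "(UNIV::'e option set) = insert None ?S"
      by (auto intro: option.exhaust)
    let ?u = "\<lambda>(z::'d \<Rightarrow> real, X::'e option \<Rightarrow> 'd \<Rightarrow> real). X(None := z)"
    let ?Psi = "\<lambda>Y::'e option \<Rightarrow> 'd \<Rightarrow> real. \<Prod>e\<in>UNIV. g (Y None) (Y (Some e))"
    have d: "distr (?Gd \<Otimes>\<^sub>M ?R) ?Y ?u = ?Y"
      unfolding U by (rule distr_pair_PiM_eq_PiM) (auto intro: prob_GK)
    have um: "?u \<in> measurable (?Gd \<Otimes>\<^sub>M ?R) ?Y"
    proof (rule measurable_PiM_single')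
      fix c :: "'e option"
      show "(\<lambda>p. ?u p c) \<in> measurable (?Gd \<Otimes>\<^sub>M ?R) ?Gd"
      proof (cases c)
        case None
        then show ?thesis by (simp add: case_prod_beta)
      next
        case (Some e)
        then have "(\<lambda>p. ?u p c) = (\<lambda>p. snd p c)" by (auto simp: fun_eq_iff)
        moreover have "(\<lambda>p. snd p c) \<in> measurable (?Gd \<Otimes>\<^sub>M ?R) ?Gd"
          using Some by (intro measurable_compose[OF measurable_snd] measurable_component_singleton) auto
        ultimately show ?thesis by simp
      qed
    qed (auto simp: space_PiM space_pair_measure)
    have Psiu: "?Psi (?u p) = (\<Prod>c\<in>?S. g (fst p) (snd p c))" for p
      by (simp add: case_prod_beta prod.reindex)
    have Fm: "(\<lambda>p. \<Prod>c\<in>?S. g (fst p) (snd p c)) \<in> borel_measurable (?Gd \<Otimes>\<^sub>M ?R)"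
      using measurable_compose[OF um Psim] by (simp add: Psiu)
    have Fint: "integrable (?Gd \<Otimes>\<^sub>M ?R) (\<lambda>p. \<Prod>c\<in>?S. g (fst p) (snd p c))"
      by (rule GR.integrable_const_bound[where B=1, OF _ Fm]) (simp add: abs_prod prod_le_1 gb)
    have "(\<integral>Y. ?Psi Y \<partial>?Y) = (\<integral>Y. ?Psi Y \<partial>distr (?Gd \<Otimes>\<^sub>M ?R) ?Y ?u)"
      by (simp only: d)
    also have "\<dots> = (\<integral>p. ?Psi (?u p) \<partial>(?Gd \<Otimes>\<^sub>M ?R))"
      by (rule integral_distr[OF um Psim])
    also have "\<dots> = (\<integral>p. (\<Prod>c\<in>?S. g (fst p) (snd p c)) \<partial>(?Gd \<Otimes>\<^sub>M ?R))"
      by (simp only: Psiu)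
    also have "\<dots> = (\<integral>z. (\<integral>X. (\<Prod>c\<in>?S. g z (X c)) \<partial>?R) \<partial>?Gd)"
      using GR.integral_fst'[OF Fint] by simp
    also have "\<dots> = (\<integral>z. (h z) ^ CARD('e) \<partial>?Gd)"
    proof (intro Bochner_Integration.integral_cong refl)
      fix z
      have "(\<integral>X. (\<Prod>c\<in>?S. g z (X c)) \<partial>?R) = (\<Prod>c\<in>?S. h z)"
        unfolding h_def by (rule RP.product_integral_prod) (auto intro: gint)
      also have "\<dots> = h z ^ CARD('e)"
        by (simp add: card_image)
      finally show "(\<integral>X. (\<Prod>c\<in>?S. g z (X c)) \<partial>?R) = h z ^ CARD('e)" .
    qed
    finally show ?thesis .
  qed
  finally show ?thesis unfolding h_def g_def .
qed




lemma sq_le_fourth: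
  fixes h :: "'a \<Rightarrow> real"
  assumes P: "prob_space M" and hm: "h \<in> borel_measurable M" and hb: "\<And>z. \<bar>h z\<bar> \<le> 1"
  shows "(\<integral>z. (h z)^2 \<partial>M)^2 \<le> (\<integral>z. (h z)^4 \<partial>M)"
proof -
  interpret prob_space M by (rule P)
  let ?X = "\<lambda>z. (h z)^2"
  have b2: "\<bar>?X z\<bar> \<le> 1" for z using hb[of z] by (simp add: abs_square_le_1)
  have b4: "\<bar>(?X z)^2\<bar> \<le> 1" for z
  proof -
    have "(?X z)^2 \<le> 1" using b2[of z] by (intro power_le_one[of "?X z"]) auto
    then show ?thesis by simp
  qed
  have hm2: "?X \<in> borel_measurable M" using hm by measurable
  have hm4: "(\<lambda>z. (?X z)^2) \<in> borel_measurable M" using hm by measurable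
  have i1: "integrable M ?X" by (rule integrable_const_bound[where B=1, OF _ hm2]) (intro AE_I2, use b2 in simp)
  have i2: "integrable M (\<lambda>z. (?X z)^2)" by (rule integrable_const_bound[where B=1, OF _ hm4]) (intro AE_I2, use b4 in simp)
  have "0 \<le> variance ?X" by (rule Bochner_Integration.integral_nonneg) simp
  also have "variance ?X = expectation (\<lambda>z. (?X z)^2) - (expectation ?X)^2"
    by (rule variance_eq[OF i1 i2])
  finally show ?thesis by (simp add: power_mult[symmetric])
qed




lemma h_props:
  fixes f :: "real^'d::finite \<Rightarrow> real" and x :: real
  assumes fm[measurable]: "f \<in> borel_measurable borel" and fb: "\<And>y. -1 \<le> f y \<and> f y \<le> 1"
  defines "h \<equiv> \<lambda>z. (\<integral>y. f (\<chi> j. sqrt x * z j + sqrt (1 - x) * y j) \<partial>(PiM UNIV (\<lambda>_. std_gauss) :: ('d \<Rightarrow> real) measure))"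
  shows "h \<in> borel_measurable (PiM UNIV (\<lambda>_. std_gauss) :: ('d \<Rightarrow> real) measure)" "\<And>z. \<bar>h z\<bar> \<le> 1"
proof -
  let ?Gd = "PiM UNIV (\<lambda>_. std_gauss) :: ('d \<Rightarrow> real) measure"
  interpret Gd: prob_space ?Gd by (rule prob_GK)
  define g where "g z y = f (\<chi> j. sqrt x * z j + sqrt (1 - x) * y j)" for z y :: "'d \<Rightarrow> real"
  have gm: "(\<lambda>(z, y). g z y) \<in> borel_measurable (?Gd \<Otimes>\<^sub>M ?Gd)"
  proof -
    have "(\<lambda>(z::'d \<Rightarrow> real, y::'d \<Rightarrow> real). (\<chi> j. sqrt x * z j + sqrt (1 - x) * y j) :: real^'d) \<in> borel_measurable (?Gd \<Otimes>\<^sub>M ?Gd)"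
      unfolding case_prod_beta by (rule measurable_vec_lambda_real) measurable
    then show ?thesis unfolding g_def case_prod_beta by measurable
  qed
  have hg: "h = (\<lambda>z. \<integral>y. g z y \<partial>?Gd)" unfolding h_def g_def by simp
  show "h \<in> borel_measurable ?Gd"
    unfolding hg by (rule Gd.borel_measurable_lebesgue_integral[OF gm])
  fix z
  have gm2: "g z \<in> borel_measurable ?Gd"
    using measurable_Pair2[OF gm, of z] by (simp add: space_PiM)
  have gb: "-1 \<le> g z y \<and> g z y \<le> 1" for y using fb by (simp add: g_def)
  have gint: "integrable ?Gd (g z)"
    by (rule Gd.integrable_const_bound[where B=1, OF _ gm2]) (intro AE_I2, use gb in \<open>auto simp: abs_le_iff\<close>)
  have "-1 \<le> (\<integral>y. g z y \<partial>?Gd)" by (rule Gd.integral_ge_const[OF gint]) (intro AE_I2, use gb in \<open>auto simp: abs_le_iff\<close>)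
  moreover have "(\<integral>y. g z y \<partial>?Gd) \<le> 1" by (rule Gd.integral_le_const[OF gint]) (intro AE_I2, use gb in \<open>auto simp: abs_le_iff\<close>)
  ultimately show "\<bar>h z\<bar> \<le> 1" unfolding hg by simp
qed




lemma less4_cases: "i < (4::nat) \<Longrightarrow> i = 0 \<or> i = 1 \<or> i = 2 \<or> i = 3" by auto
lemma less2_cases: "i < (2::nat) \<Longrightarrow> i = 0 \<or> i = 1" by auto

theorem mainTheorem5:
  fixes x :: real
    and f :: "real^'d::finite \<Rightarrow> real"
    and v1 v2 v3 v4 :: "real^'n::finite"
    and w1 w2 :: "real^'m::finite"
  assumes "0 \<le> x" "x \<le> 1"
    and "f \<in> borel_measurable borel"
    and "\<And>y. -1 \<le> f y \<and> f y \<le> 1"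
    and "norm v1 = 1" "norm v2 = 1" "norm v3 = 1" "norm v4 = 1"
    and "v1 \<bullet> v2 = x" "v1 \<bullet> v3 = x" "v1 \<bullet> v4 = x"
    and "v2 \<bullet> v3 = x" "v2 \<bullet> v4 = x" "v3 \<bullet> v4 = x"
    and "norm w1 = 1" "norm w2 = 1" "w1 \<bullet> w2 = x"
  shows "round_corr f [v1, v2, v3, v4] \<ge> (round_corr f [w1, w2])\<^sup>2"
proof -
  note fm = assms(3) and fb = assms(4)
  let ?Gd = "PiM UNIV (\<lambda>_. std_gauss) :: ('d \<Rightarrow> real) measure"
  define h where "h = (\<lambda>z. (\<integral>y. f (\<chi> j. sqrt x * z j + sqrt (1 - x) * y j) \<partial>?Gd))"
  have hm: "h \<in> borel_measurable ?Gd" and hb: "\<And>z. \<bar>h z\<bar> \<le> 1"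
    using h_props[OF fm fb, of x] unfolding h_def by auto
  have nn: "v \<bullet> v = 1" if "norm v = 1" for v :: "real^'n"
    using that by (simp add: dot_square_norm)
  have nm: "w \<bullet> w = 1" if "norm w = 1" for w :: "real^'m"
    using that by (simp add: dot_square_norm)
  have ci: "canon x e \<bullet> canon x e' = x + (if e = e' then 1 - x else 0)" for e e' :: "'e::finite"
    using assms(1,2) by (rule canon_inner)
  define cs4 where "cs4 = [canon x (False, False), canon x (False, True), canon x (True, False), canon x (True, True)]"
  have "round_corr f [v1, v2, v3, v4]
      = (\<integral>r. (\<Prod>i<length [v1, v2, v3, v4]. f (gauss_proj r ([v1, v2, v3, v4]!i))) \<partial>(PiM UNIV (\<lambda>_. std_gauss) :: ('d \<times> 'n \<Rightarrow> real) measure))"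
    by (rule round_corr_eq[OF fm fb])
  also have "\<dots> = (\<integral>r. (\<Prod>i<length cs4. f (gauss_proj r (cs4!i))) \<partial>(PiM UNIV (\<lambda>_. std_gauss) :: ('d \<times> (bool \<times> bool) option \<Rightarrow> real) measure))"
  proof (rule gram_inv[OF fm])
    show "length cs4 = length [v1, v2, v3, v4]" by (simp add: cs4_def)
    fix i j assume "i < length [v1, v2, v3, v4]" "j < length [v1, v2, v3, v4]"
    then have "i < 4" "j < 4" by auto
    then show "[v1, v2, v3, v4] ! i \<bullet> [v1, v2, v3, v4] ! j = cs4 ! i \<bullet> cs4 ! j"
      using less4_cases[OF \<open>i < 4\<close>] less4_cases[OF \<open>j < 4\<close>]
      by (auto simp: cs4_def ci nn inner_commute assms(5-14))
  qed
  also have "\<dots> = (\<integral>r. (\<Prod>e\<in>UNIV. f (gauss_proj r (canon x e))) \<partial>(PiM UNIV (\<lambda>_. std_gauss) :: ('d \<times> (bool \<times> bool) option \<Rightarrow> real) measure))"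
    by (intro Bochner_Integration.integral_cong refl)
       (simp add: cs4_def numeral_eq_Suc lessThan_Suc UNIV_bool mult_ac flip: UNIV_Times_UNIV)
  also have "\<dots> = (\<integral>z. (h z) ^ CARD(bool \<times> bool) \<partial>?Gd)"
    unfolding h_def by (rule canon_integral[OF fm fb])
  also have "\<dots> = (\<integral>z. (h z) ^ 4 \<partial>?Gd)"
    by (simp add: card_prod')
  finally have E4: "round_corr f [v1, v2, v3, v4] = (\<integral>z. (h z) ^ 4 \<partial>?Gd)" .
  define cs2 where "cs2 = [canon x False, canon x True]"
  have "round_corr f [w1, w2]
      = (\<integral>r. (\<Prod>i<length [w1, w2]. f (gauss_proj r ([w1, w2]!i))) \<partial>(PiM UNIV (\<lambda>_. std_gauss) :: ('d \<times> 'm \<Rightarrow> real) measure))"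
    by (rule round_corr_eq[OF fm fb])
  also have "\<dots> = (\<integral>r. (\<Prod>i<length cs2. f (gauss_proj r (cs2!i))) \<partial>(PiM UNIV (\<lambda>_. std_gauss) :: ('d \<times> bool option \<Rightarrow> real) measure))"
  proof (rule gram_inv[OF fm])
    show "length cs2 = length [w1, w2]" by (simp add: cs2_def)
    fix i j assume "i < length [w1, w2]" "j < length [w1, w2]"
    then have "i < 2" "j < 2" by auto
    then show "[w1, w2] ! i \<bullet> [w1, w2] ! j = cs2 ! i \<bullet> cs2 ! j"
      using less2_cases[OF \<open>i < 2\<close>] less2_cases[OF \<open>j < 2\<close>]
      by (auto simp: cs2_def ci nm inner_commute assms(15-17))
  qed
  also have "\<dots> = (\<integral>r. (\<Prod>e\<in>UNIV. f (gauss_proj r (canon x e))) \<partial>(PiM UNIV (\<lambda>_. std_gauss) :: ('d \<times> bool option \<Rightarrow> real) measure))"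
    by (intro Bochner_Integration.integral_cong refl)
       (simp add: cs2_def numeral_eq_Suc lessThan_Suc UNIV_bool mult_ac)
  also have "\<dots> = (\<integral>z. (h z) ^ CARD(bool) \<partial>?Gd)"
    unfolding h_def by (rule canon_integral[OF fm fb])
  also have "\<dots> = (\<integral>z. (h z) ^ 2 \<partial>?Gd)"
    by simp
  finally have E2: "round_corr f [w1, w2] = (\<integral>z. (h z) ^ 2 \<partial>?Gd)" .
  show ?thesis
    unfolding E4 E2 using sq_le_fourth[OF prob_GK hm hb] by simp
qed


end
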